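(* Let $F$ be the class of all two-sorted term-modal frames (for the fixed agent set $\mathcal{A}$). For every formula $\varphi$ of the language $\mathcal{L}$: if $\vdash_{\mathbf{K}_{TM}}\varphi$, then $\models_F\varphi$, i.e. $\varphi$ is valid on every frame in $F$.
   Context: Fix a finite nonempty set of agents $\mathcal{A}=\{\alpha_1,\dots,\alpha_n\}$ and two sorts $agt$, $obj$. The language $\mathcal{L}$ has: countably infinite sets $VAR_{agt}$, $VAR_{obj}$ of variables; a countable (possibly empty) set of constants, each with a sort; a countable (possibly empty) set of function symbols, each with an arity $\alpha\in\{agt,obj\}^{k+1}$, $k\ge 0$ (first $k$ entries: argument sorts; last entry: value sort); a countable (possibly empty) set of relation symbols, each with an arity $\beta\in\{agt,obj\}^k$, $k\ge 1$; the symbol $=$; $\neg,\to$; $\forall$; and a modal operator $K_t$ for every agent-sorted term $t$. Terms: variables, constants, and $f(t_1,\dots,t_k)$ with $t_i$ of sort $\alpha_i$ (of sort $\alpha_{k+1}$). Formulas: $t_1=t_2$ (any terms), $P(t_1,\dots,t_k)$ ($t_i$ of sort $\beta_i$), $\neg\varphi$, $\varphi\to\psi$, $\forall x\varphi$, $K_t\varphi$ ($t$ agent-sorted). Other connectives as usual, $\exists x:=\neg\forall x\neg$, $P_t:=\neg K_t\neg$. Free variables as usual, except that the free variables of $K_t\varphi$ are those of $t$ together with those of $\varphi$. $\varphi(t/x)$ denotes substitution of $t$ for the free occurrences of $x$ (renaming bound variables so no variable of $t$ becomes bound). A frame is $\langle W,\mathcal{R},DOM\rangle$ with $W\neq\emptyset$,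 $\mathcal{R}:\mathcal{A}\to\mathcal{P}(W\times W)$, and $DOM=DOM_{agt}\sqcup DOM_{obj}$ a disjoint union of nonempty sets with $DOM_{agt}=\mathcal{A}$. An interpretation $\mathcal{I}$ assigns to each relation symbol $P$ of arity $\beta$ and world $w$ a set $\mathcal{I}(P,w)\subseteq\prod_{i=1}^k DOM_{\beta_i}$; to each function symbol $f$ of arity $\alpha$ and $w$ a set $\mathcal{I}(f,w)\subseteq\prod_{i=1}^{k+1}DOM_{\alpha_i}$; $\mathcal{I}(=,w)=\{(d,d):d\in DOM\}$; to each constant $c$ of sort $\sigma$ and $w$ an element $\mathcal{I}(c,w)\in DOM_\sigma$. A model is a frame plus an interpretation (it is "based on" the frame). A valuation $v$ maps each $VAR_\sigma$ surjectively onto $DOM_\sigma$; an $x$-variant of $v$ agrees with $v$ except possibly at $x$. Extensions: $t^{w,v}=v(t)$ for a variable, $\mathcal{I}(t,w)$ for a constant. Truth: $\mathcal M,w\models_v P(t_1,\dots,t_k)$ iff $(t_1^{w,v},\dots,t_k^{w,v})\in\mathcal{I}(P,w)$; $\mathcal M,w\models_v t_1=t_2$ iff $t_1^{w,v}=t_2^{w,v}$; $\neg,\to$ classically; $\mathcal M,w\models_v\forall x\varphi$ iff $\mathcal M,w\models_{v'}\varphi$ for every $x$-variant $v'$ of $v$; $\mathcal M,w\models_v K_t\varphi$ iff $\mathcal M,w'\models_v\varphi$ for all $w'$ with $(w,w')\in\mathcal{R}(t^{w,v})$. A formula is valid in a frame if it is true at every world under every valuation in every model based on the frame; valid on a class of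 frames if valid in each of its frames. The system $\mathbf{K}_{TM}$: axioms are all substitution instances (by formulas of $\mathcal L$) of valid formulas of propositional modal logic, together with: ($\forall$) $\forall x\varphi\to\varphi(y/x)$ for any formula $\varphi$ and variable $y$ free in $\varphi$; (Id) $t=t$ for every term $t$; (MSD) $x\neq y$ for $x\in VAR_{agt}$, $y\in VAR_{obj}$; (PS) $(x=y)\to(\varphi(x)\to\varphi(y))$ for variables $x,y$ and formulas $\varphi$ (with $x,y$ agent-sorted when they occur as modal indices); ($\exists$Id) $(c=c)\to\exists x(x=c)$ for every constant $c$; (N) $\exists x_1\cdots\exists x_n\big(x_1\neq x_2\wedge\dots\wedge x_{n-1}\neq x_n\wedge\forall y(y=x_1\vee\dots\vee y=x_n)\big)$ for agent variables $x_1,\dots,x_n,y$, $n=|\mathcal A|$; (K) $K_t(\varphi\to\psi)\to(K_t\varphi\to K_t\psi)$; (BF) $\forall xK_t\varphi\to K_t\forall x\varphi$ for agent-sorted $t$ and variable $x\neq t$; (KNI) $(x\neq y)\to K_t(x\neq y)$ for variables $x,y$ and agent-sorted $t$. Rules: modus ponens; (KG) from $\varphi$ infer $K_t\varphi$ for agent-sorted $t$; (Gen) from $\varphi\to\psi$ infer $\varphi\to\forall x\psi$ when $x$ is not free in $\varphi$. $\vdash_{\mathbf{K}_{TM}}\varphi$ means $\varphi$ is the last line of a finite sequence each of whose members is an axiom or follows from earlier ones by a rule. *)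

theory Defs
  imports Main "HOL-Library.Countable_Set"
begin

datatype sort = Agt | Obj

datatype var = Vr sort nat

fun vsort :: "var \<Rightarrow> sort" where
  "vsort (Vr s n) = s"

datatype ('c, 'f) trm = TV var | TC 'c | TF 'f "('c, 'f) trm list"

datatype ('c, 'f, 'p) fm =
    Eq "('c, 'f) trm" "('c, 'f) trm"
  | Rel 'p "('c, 'f) trm list"
  | Neg "('c, 'f, 'p) fm"
  | Imp "('c, 'f, 'p) fm" "('c, 'f, 'p) fm"
  | All var "('c, 'f, 'p) fm"
  | Kn "('c, 'f) trm" "('c, 'f, 'p) fm"

text \<open>Signature: partial maps; a symbol is in the language iff its entry is Some.\<close>
record ('c, 'f, 'p) sig =
  csig :: "'c \<Rightarrow> sort option"
  fsig :: "'f \<Rightarrow> (sort list \<times> sort) option"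
  psig :: "'p \<Rightarrow> sort list option"

definition wf_sig :: "('c, 'f, 'p) sig \<Rightarrow> bool" where
  "wf_sig S \<longleftrightarrow> countable (dom (csig S)) \<and> countable (dom (fsig S)) \<and>
     countable (dom (psig S)) \<and> (\<forall>p \<beta>. psig S p = Some \<beta> \<longrightarrow> \<beta> \<noteq> [])"

fun tsort :: "('c, 'f, 'p) sig \<Rightarrow> ('c, 'f) trm \<Rightarrow> sort option" where
  "tsort S (TV x) = Some (vsort x)"
| "tsort S (TC c) = csig S c"
| "tsort S (TF f ts) = (case fsig S f of None \<Rightarrow> None
     | Some (ss, s) \<Rightarrow> if map (tsort S) ts = map Some ss then Some s else None)"

fun wf_fm :: "('c, 'f, 'p) sig \<Rightarrow> ('c, 'f, 'p) fm \<Rightarrow> bool" where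
  "wf_fm S (Eq t1 t2) = (tsort S t1 \<noteq> None \<and> tsort S t2 \<noteq> None)"
| "wf_fm S (Rel P ts) = (case psig S P of None \<Rightarrow> False
     | Some ss \<Rightarrow> map (tsort S) ts = map Some ss)"
| "wf_fm S (Neg \<phi>) = wf_fm S \<phi>"
| "wf_fm S (Imp \<phi> \<psi>) = (wf_fm S \<phi> \<and> wf_fm S \<psi>)"
| "wf_fm S (All x \<phi>) = wf_fm S \<phi>"
| "wf_fm S (Kn t \<phi>) = (tsort S t = Some Agt \<and> wf_fm S \<phi>)"

fun tvars :: "('c, 'f) trm \<Rightarrow> var set" where
  "tvars (TV x) = {x}"
| "tvars (TC c) = {}"
| "tvars (TF f ts) = \<Union> (set (map tvars ts))"

fun fv :: "('c, 'f, 'p) fm \<Rightarrow> var set" where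
  "fv (Eq t1 t2) = tvars t1 \<union> tvars t2"
| "fv (Rel P ts) = \<Union> (set (map tvars ts))"
| "fv (Neg \<phi>) = fv \<phi>"
| "fv (Imp \<phi> \<psi>) = fv \<phi> \<union> fv \<psi>"
| "fv (All x \<phi>) = fv \<phi> - {x}"
| "fv (Kn t \<phi>) = tvars t \<union> fv \<phi>"

fun substt :: "(var \<Rightarrow> ('c, 'f) trm) \<Rightarrow> ('c, 'f) trm \<Rightarrow> ('c, 'f) trm" where
  "substt \<sigma> (TV x) = \<sigma> x"
| "substt \<sigma> (TC c) = TC c"
| "substt \<sigma> (TF f ts) = TF f (map (substt \<sigma>) ts)"

definition fresh :: "sort \<Rightarrow> var set \<Rightarrow> var" where
  "fresh s X = Vr s (LEAST n. Vr s n \<notin> X)"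

text \<open>Capture-avoiding (simultaneous) substitution: a bound variable is renamed
  (to a fresh variable of the same sort) exactly when it would capture a
  variable of a substituted term.\<close>
fun subst :: "(var \<Rightarrow> ('c, 'f) trm) \<Rightarrow> ('c, 'f, 'p) fm \<Rightarrow> ('c, 'f, 'p) fm" where
  "subst \<sigma> (Eq t1 t2) = Eq (substt \<sigma> t1) (substt \<sigma> t2)"
| "subst \<sigma> (Rel P ts) = Rel P (map (substt \<sigma>) ts)"
| "subst \<sigma> (Neg \<phi>) = Neg (subst \<sigma> \<phi>)"
| "subst \<sigma> (Imp \<phi> \<psi>) = Imp (subst \<sigma> \<phi>) (subst \<sigma> \<psi>)"
| "subst \<sigma> (All z \<phi>) =
     (let X = (\<Union>w \<in> fv (All z \<phi>). tvars (\<sigma> w));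
          z' = (if z \<in> X then fresh (vsort z) X else z)
      in All z' (subst (\<sigma>(z := TV z')) \<phi>))"
| "subst \<sigma> (Kn t \<phi>) = Kn (substt \<sigma> t) (subst \<sigma> \<phi>)"

definition substitute :: "('c, 'f, 'p) fm \<Rightarrow> ('c, 'f) trm \<Rightarrow> var \<Rightarrow> ('c, 'f, 'p) fm" where
  "substitute \<phi> t x = subst (TV(x := t)) \<phi>"

definition conj :: "('c, 'f, 'p) fm \<Rightarrow> ('c, 'f, 'p) fm \<Rightarrow> ('c, 'f, 'p) fm" where
  "conj \<phi> \<psi> = Neg (Imp \<phi> (Neg \<psi>))"

definition disj :: "('c, 'f, 'p) fm \<Rightarrow> ('c, 'f, 'p) fm \<Rightarrow> ('c, 'f, 'p) fm" where
  "disj \<phi> \<psi> = Imp (Neg \<phi>) \<psi>"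

definition Ex :: "var \<Rightarrow> ('c, 'f, 'p) fm \<Rightarrow> ('c, 'f, 'p) fm" where
  "Ex x \<phi> = Neg (All x (Neg \<phi>))"

definition neq :: "('c, 'f) trm \<Rightarrow> ('c, 'f) trm \<Rightarrow> ('c, 'f, 'p) fm" where
  "neq t1 t2 = Neg (Eq t1 t2)"

fun conjs :: "('c, 'f, 'p) fm list \<Rightarrow> ('c, 'f, 'p) fm \<Rightarrow> ('c, 'f, 'p) fm" where
  "conjs [] \<psi> = \<psi>"
| "conjs (\<phi> # \<phi>s) \<psi> = conj \<phi> (conjs \<phi>s \<psi>)"

fun disjs :: "('c, 'f, 'p) fm \<Rightarrow> ('c, 'f, 'p) fm list \<Rightarrow> ('c, 'f, 'p) fm" where
  "disjs \<phi> [] = \<phi>"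
| "disjs \<phi> (\<psi> # \<psi>s) = disj \<phi> (disjs \<psi> \<psi>s)"

fun exs :: "var list \<Rightarrow> ('c, 'f, 'p) fm \<Rightarrow> ('c, 'f, 'p) fm" where
  "exs [] \<phi> = \<phi>"
| "exs (x # xs) \<phi> = Ex x (exs xs \<phi>)"

definition ax_N :: "var list \<Rightarrow> var \<Rightarrow> ('c, 'f, 'p) fm" where
  "ax_N xs y = exs xs
     (conjs [neq (TV (xs ! i)) (TV (xs ! j)). i \<leftarrow> [0..<length xs], j \<leftarrow> [Suc i..<length xs]]
        (All y (disjs (Eq (TV y) (TV (hd xs))) [Eq (TV y) (TV x). x \<leftarrow> tl xs])))"

datatype pfm = PAt nat | PNeg pfm | PImp pfm pfm | PBox nat pfm

fun psat :: "(nat \<Rightarrow> (nat \<times> nat) set) \<Rightarrow> (nat \<Rightarrow> nat set) \<Rightarrow> nat \<Rightarrow> pfm \<Rightarrow> bool" where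
  "psat R V w (PAt n) = (w \<in> V n)"
| "psat R V w (PNeg \<phi>) = (\<not> psat R V w \<phi>)"
| "psat R V w (PImp \<phi> \<psi>) = (psat R V w \<phi> \<longrightarrow> psat R V w \<psi>)"
| "psat R V w (PBox i \<phi>) = (\<forall>w'. (w, w') \<in> R i \<longrightarrow> psat R V w' \<phi>)"

text \<open>Validity in all Kripke models (worlds: any nonempty set of naturals, i.e.
  all countable models, which suffices for propositional modal logic).\<close>
definition pvalid :: "pfm \<Rightarrow> bool" where
  "pvalid \<phi> \<longleftrightarrow> (\<forall>W R V. W \<noteq> {} \<longrightarrow> (\<forall>i. R i \<subseteq> W \<times> W) \<longrightarrow>
                      (\<forall>w \<in> W. psat R V w \<phi>))"

text \<open>Substitution instance: atoms by L-formulas, box indices by (agent) terms.\<close>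
fun pinst :: "(nat \<Rightarrow> ('c, 'f, 'p) fm) \<Rightarrow> (nat \<Rightarrow> ('c, 'f) trm) \<Rightarrow> pfm \<Rightarrow> ('c, 'f, 'p) fm" where
  "pinst \<rho> \<tau> (PAt n) = \<rho> n"
| "pinst \<rho> \<tau> (PNeg \<phi>) = Neg (pinst \<rho> \<tau> \<phi>)"
| "pinst \<rho> \<tau> (PImp \<phi> \<psi>) = Imp (pinst \<rho> \<tau> \<phi>) (pinst \<rho> \<tau> \<psi>)"
| "pinst \<rho> \<tau> (PBox i \<phi>) = Kn (\<tau> i) (pinst \<rho> \<tau> \<phi>)"

inductive ax_KTM :: "('c, 'f, 'p) sig \<Rightarrow> nat \<Rightarrow> ('c, 'f, 'p) fm \<Rightarrow> bool" for S n where
  Taut: "pvalid \<psi> \<Longrightarrow> ax_KTM S n (pinst \<rho> \<tau> \<psi>)"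
| AllE: "vsort y = vsort x \<Longrightarrow> ax_KTM S n (Imp (All x \<phi>) (substitute \<phi> (TV y) x))"
| Id: "ax_KTM S n (Eq t t)"
| MSD: "vsort x = Agt \<Longrightarrow> vsort y = Obj \<Longrightarrow> ax_KTM S n (neq (TV x) (TV y))"
| PS: "ax_KTM S n (Imp (Eq (TV x) (TV y)) (Imp \<phi> (substitute \<phi> (TV y) x)))"
| ExId: "csig S c = Some (vsort x) \<Longrightarrow>
          ax_KTM S n (Imp (Eq (TC c) (TC c)) (Ex x (Eq (TV x) (TC c))))"
| N: "length xs = n \<Longrightarrow> distinct (y # xs) \<Longrightarrow> (\<forall>z \<in> set (y # xs). vsort z = Agt) \<Longrightarrow>
          ax_KTM S n (ax_N xs y)"
| K: "ax_KTM S n (Imp (Kn t (Imp \<phi> \<psi>)) (Imp (Kn t \<phi>) (Kn t \<psi>)))"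
| BF: "x \<notin> tvars t \<Longrightarrow> ax_KTM S n (Imp (All x (Kn t \<phi>)) (Kn t (All x \<phi>)))"
| KNI: "ax_KTM S n (Imp (neq (TV x) (TV y)) (Kn t (neq (TV x) (TV y))))"

text \<open>Theorems; every axiom used must be a (well-formed) formula of L, which in
  particular forces modal indices to be agent-sorted.\<close>
inductive derivable :: "('c, 'f, 'p) sig \<Rightarrow> nat \<Rightarrow> ('c, 'f, 'p) fm \<Rightarrow> bool" for S n where
  Ax: "ax_KTM S n \<phi> \<Longrightarrow> wf_fm S \<phi> \<Longrightarrow> derivable S n \<phi>"
| MP: "derivable S n \<phi> \<Longrightarrow> derivable S n (Imp \<phi> \<psi>) \<Longrightarrow> derivable S n \<psi>"
| KG: "derivable S n \<phi> \<Longrightarrow> tsort S t = Some Agt \<Longrightarrow> derivable S n (Kn t \<phi>)"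
| Gen: "derivable S n (Imp \<phi> \<psi>) \<Longrightarrow> x \<notin> fv \<phi> \<Longrightarrow> derivable S n (Imp \<phi> (All x \<psi>))"

text \<open>DOM = DOM_agt \<sqcup> DOM_obj, with DOM_agt = the agent set (type 'ag).\<close>
datatype ('ag, 'o) dval = AgV 'ag | ObV 'o

fun domS :: "'o set \<Rightarrow> sort \<Rightarrow> ('ag, 'o) dval set" where
  "domS D Agt = range AgV"
| "domS D Obj = ObV ` D"

definition is_frame :: "'w set \<Rightarrow> ('ag \<Rightarrow> ('w \<times> 'w) set) \<Rightarrow> 'o set \<Rightarrow> bool" where
  "is_frame W R D \<longleftrightarrow> W \<noteq> {} \<and> (\<forall>a. R a \<subseteq> W \<times> W) \<and> D \<noteq> {}"

record ('c, 'f, 'p, 'w, 'ag, 'o) interp =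
  Ir :: "'p \<Rightarrow> 'w \<Rightarrow> ('ag, 'o) dval list set"
  If :: "'f \<Rightarrow> 'w \<Rightarrow> ('ag, 'o) dval list set"
  Ic :: "'c \<Rightarrow> 'w \<Rightarrow> ('ag, 'o) dval"

definition sorted_tuple :: "'o set \<Rightarrow> ('ag, 'o) dval list \<Rightarrow> sort list \<Rightarrow> bool" where
  "sorted_tuple D ds ss \<longleftrightarrow> list_all2 (\<lambda>d s. d \<in> domS D s) ds ss"

text \<open>Interpretations; a function symbol is interpreted (at each world) by the graph
  of a total function on the appropriate sorted domains.\<close>
definition is_interp :: "('c, 'f, 'p) sig \<Rightarrow> 'w set \<Rightarrow> 'o set \<Rightarrow>
    ('c, 'f, 'p, 'w, 'ag, 'o) interp \<Rightarrow> bool" where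
  "is_interp S W D I \<longleftrightarrow>
     (\<forall>P ss w. psig S P = Some ss \<longrightarrow> w \<in> W \<longrightarrow> (\<forall>ds \<in> Ir I P w. sorted_tuple D ds ss)) \<and>
     (\<forall>f ss s w. fsig S f = Some (ss, s) \<longrightarrow> w \<in> W \<longrightarrow>
         (\<forall>ds \<in> If I f w. sorted_tuple D ds (ss @ [s])) \<and>
         (\<forall>ds. sorted_tuple D ds ss \<longrightarrow> (\<exists>!d. ds @ [d] \<in> If I f w))) \<and>
     (\<forall>c s w. csig S c = Some s \<longrightarrow> w \<in> W \<longrightarrow> Ic I c w \<in> domS D s)"

definition is_valuation :: "'o set \<Rightarrow> (var \<Rightarrow> ('ag, 'o) dval) \<Rightarrow> bool" where
  "is_valuation D v \<longleftrightarrow> (\<forall>s. v ` {x. vsort x = s} = domS D s)"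

fun teval :: "('c, 'f, 'p, 'w, 'ag, 'o) interp \<Rightarrow> 'w \<Rightarrow> (var \<Rightarrow> ('ag, 'o) dval) \<Rightarrow>
    ('c, 'f) trm \<Rightarrow> ('ag, 'o) dval" where
  "teval I w v (TV x) = v x"
| "teval I w v (TC c) = Ic I c w"
| "teval I w v (TF f ts) = (THE d. map (teval I w v) ts @ [d] \<in> If I f w)"

fun accR :: "('ag \<Rightarrow> ('w \<times> 'w) set) \<Rightarrow> ('ag, 'o) dval \<Rightarrow> ('w \<times> 'w) set" where
  "accR R (AgV a) = R a"
| "accR R (ObV d) = {}"

fun sat :: "('ag \<Rightarrow> ('w \<times> 'w) set) \<Rightarrow> 'o set \<Rightarrow> ('c, 'f, 'p, 'w, 'ag, 'o) interp \<Rightarrow>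
    'w \<Rightarrow> (var \<Rightarrow> ('ag, 'o) dval) \<Rightarrow> ('c, 'f, 'p) fm \<Rightarrow> bool" where
  "sat R D I w v (Eq t1 t2) = (teval I w v t1 = teval I w v t2)"
| "sat R D I w v (Rel P ts) = (map (teval I w v) ts \<in> Ir I P w)"
| "sat R D I w v (Neg \<phi>) = (\<not> sat R D I w v \<phi>)"
| "sat R D I w v (Imp \<phi> \<psi>) = (sat R D I w v \<phi> \<longrightarrow> sat R D I w v \<psi>)"
| "sat R D I w v (All x \<phi>) = (\<forall>d \<in> domS D (vsort x). sat R D I w (v(x := d)) \<phi>)"
| "sat R D I w v (Kn t \<phi>) =
     (\<forall>w'. (w, w') \<in> accR R (teval I w v t) \<longrightarrow> sat R D I w' v \<phi>)"

definition valid_in_frame :: "('c, 'f, 'p) sig \<Rightarrow> 'w set \<Rightarrow> ('ag \<Rightarrow> ('w \<times> 'w) set) \<Rightarrow>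
    'o set \<Rightarrow> ('c, 'f, 'p) fm \<Rightarrow> bool" where
  "valid_in_frame S W R D \<phi> \<longleftrightarrow>
     (\<forall>I :: ('c, 'f, 'p, 'w, 'ag, 'o) interp. is_interp S W D I \<longrightarrow>
        (\<forall>w \<in> W. \<forall>v. is_valuation D v \<longrightarrow> sat R D I w v \<phi>))"

end

theory Submission
  imports Defs
begin

instance pfm :: countable by countable_datatype

fun gsat :: "(nat \<Rightarrow> ('a \<times> 'a) set) \<Rightarrow> (nat \<Rightarrow> 'a set) \<Rightarrow> 'a \<Rightarrow> pfm \<Rightarrow> bool" where
  "gsat R V w (PAt n) = (w \<in> V n)"
| "gsat R V w (PNeg \<phi>) = (\<not> gsat R V w \<phi>)"
| "gsat R V w (PImp \<phi> \<psi>) = (gsat R V w \<phi> \<longrightarrow> gsat R V w \<psi>)"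
| "gsat R V w (PBox i \<phi>) = (\<forall>w'. (w, w') \<in> R i \<longrightarrow> gsat R V w' \<phi>)"

lemma gsat_psat: "gsat R V w \<phi> = psat R V w \<phi>"
  by (induction \<phi> arbitrary: w) auto

definition wit :: "(nat \<Rightarrow> ('a \<times> 'a) set) \<Rightarrow> (nat \<Rightarrow> 'a set) \<Rightarrow> 'a \<Rightarrow> nat \<times> pfm \<Rightarrow> 'a" where
  "wit R V x p = (SOME y. (x, y) \<in> R (fst p) \<and> \<not> gsat R V y (snd p))"

fun walk :: "(nat \<Rightarrow> ('a \<times> 'a) set) \<Rightarrow> (nat \<Rightarrow> 'a set) \<Rightarrow> 'a \<Rightarrow> (nat \<times> pfm) list \<Rightarrow> 'a" where
  "walk R V x [] = x"
| "walk R V x (p # ps) = walk R V (wit R V x p) ps"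

lemma walk_snoc: "walk R V x (ps @ [p]) = wit R V (walk R V x ps) p"
  by (induction ps arbitrary: x) auto

lemma gsat_nat:
  fixes g :: "nat \<Rightarrow> 'a"
  assumes cl: "\<And>m i \<phi> y. (g m, y) \<in> R i \<Longrightarrow> \<not> gsat R V y \<phi> \<Longrightarrow>
      \<exists>n. (g m, g n) \<in> R i \<and> \<not> gsat R V (g n) \<phi>"
  shows "gsat (\<lambda>i. {(m, n). (g m, g n) \<in> R i}) (\<lambda>k. {m. g m \<in> V k}) m \<phi> = gsat R V (g m) \<phi>"
proof (induction \<phi> arbitrary: m)
  case (PBox i \<phi>)
  show ?case
  proof
    assume L: "gsat (\<lambda>i. {(m, n). (g m, g n) \<in> R i}) (\<lambda>k. {m. g m \<in> V k}) m (PBox i \<phi>)"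
    show "gsat R V (g m) (PBox i \<phi>)"
    proof (rule ccontr)
      assume "\<not> gsat R V (g m) (PBox i \<phi>)"
      then obtain y where "(g m, y) \<in> R i" "\<not> gsat R V y \<phi>" by auto
      then obtain n where "(g m, g n) \<in> R i" "\<not> gsat R V (g n) \<phi>" using cl by blast
      then show False using L PBox.IH by simp
    qed
  next
    assume "gsat R V (g m) (PBox i \<phi>)"
    then show "gsat (\<lambda>i. {(m, n). (g m, g n) \<in> R i}) (\<lambda>k. {m. g m \<in> V k}) m (PBox i \<phi>)"
      using PBox.IH by simp
  qed
qed auto

lemma pvalid_any:
  fixes R :: "nat \<Rightarrow> ('a \<times> 'a) set"
  assumes "pvalid \<psi>"
  shows "gsat R V u \<psi>"
proof -
  define g where "g = (\<lambda>m::nat. walk R V u (from_nat m))"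
  have cl: "\<exists>n. (g m, g n) \<in> R i \<and> \<not> gsat R V (g n) \<phi>"
    if "(g m, y) \<in> R i" "\<not> gsat R V y \<phi>" for m i \<phi> y
  proof -
    let ?n = "to_nat (from_nat m @ [(i, \<phi>)] :: (nat \<times> pfm) list)"
    have w: "g ?n = wit R V (g m) (i, \<phi>)" by (simp add: g_def walk_snoc)
    have P: "(g m, wit R V (g m) (i, \<phi>)) \<in> R i \<and> \<not> gsat R V (wit R V (g m) (i, \<phi>)) \<phi>"
    proof -
      have ex: "\<exists>y. (g m, y) \<in> R i \<and> \<not> gsat R V y \<phi>" using that by blast
      show ?thesis unfolding wit_def fst_conv snd_conv by (rule someI_ex[OF ex])
    qed
    show ?thesis
      by (rule exI[of _ ?n]) (simp only: w P, simp)
  qed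
  have u: "g (to_nat ([] :: (nat \<times> pfm) list)) = u" by (simp add: g_def)
  have "psat (\<lambda>i. {(m, n). (g m, g n) \<in> R i}) (\<lambda>k. {m. g m \<in> V k}) (to_nat ([] :: (nat \<times> pfm) list)) \<psi>"
    using assms[unfolded pvalid_def, rule_format, of UNIV "\<lambda>i. {(m, n). (g m, g n) \<in> R i}" "to_nat ([] :: (nat \<times> pfm) list)" "\<lambda>k. {m. g m \<in> V k}"]
    by simp
  then show ?thesis using gsat_nat[of g R V, OF cl] u by (simp add: gsat_psat)
qed

lemma finite_tvars: "finite (tvars t)"
  by (induction t) auto

lemma finite_fv: "finite (fv \<phi>)"
  by (induction \<phi>) (auto simp: finite_tvars)

lemma fresh_sort: "vsort (fresh s X) = s"
  by (simp add: fresh_def)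

lemma fresh_notin: "finite X \<Longrightarrow> fresh s X \<notin> X"
proof -
  assume f: "finite X"
  have "\<exists>n. Vr s n \<notin> X"
  proof (rule ccontr)
    assume "\<not> (\<exists>n. Vr s n \<notin> X)"
    then have "range (Vr s) \<subseteq> X" by auto
    moreover have "infinite (range (Vr s))"
      by (rule range_inj_infinite) (simp add: inj_def)
    ultimately show False using f finite_subset by blast
  qed
  then show ?thesis unfolding fresh_def by (rule LeastI_ex)
qed

lemma teval_cong: "(\<forall>x\<in>tvars t. v x = v' x) \<Longrightarrow> teval I w v t = teval I w v' t"
proof (induction t)
  case (TF f ts)
  then have *: "map (teval I w v) ts = map (teval I w v') ts" by auto
  show ?case by (simp only: teval.simps *)
qed auto

lemma sat_cong: "(\<forall>x\<in>fv \<phi>. v x = v' x) \<Longrightarrow> sat R D I w v \<phi> = sat R D I w v' \<phi>"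
proof (induction \<phi> arbitrary: v v' w)
  case (Eq t1 t2)
  have "teval I w v t1 = teval I w v' t1" using Eq.prems by (intro teval_cong) auto
  moreover have "teval I w v t2 = teval I w v' t2" using Eq.prems by (intro teval_cong) auto
  ultimately show ?case by (simp only: sat.simps)
next
  case (Rel P ts)
  have *: "map (teval I w v) ts = map (teval I w v') ts"
  proof (rule map_cong[OF refl])
    fix t assume "t \<in> set ts"
    then show "teval I w v t = teval I w v' t" using Rel.prems by (intro teval_cong) auto
  qed
  show ?case by (simp only: sat.simps *)
next
  case (Neg \<phi>)
  have "sat R D I w v \<phi> = sat R D I w v' \<phi>" using Neg.prems by (intro Neg.IH) simp
  then show ?case by (simp only: sat.simps)
next
  case (Imp \<phi> \<psi>)
  have "sat R D I w v \<phi> = sat R D I w v' \<phi>" using Imp.prems by (intro Imp.IH) simp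
  moreover have "sat R D I w v \<psi> = sat R D I w v' \<psi>" using Imp.prems by (intro Imp.IH) simp
  ultimately show ?case by (simp only: sat.simps)
next
  case (All x \<phi>)
  have "\<And>d. sat R D I w (v(x := d)) \<phi> = sat R D I w (v'(x := d)) \<phi>"
    using All.prems by (intro All.IH) auto
  then show ?case by (simp only: sat.simps)
next
  case (Kn t \<phi>)
  have "teval I w v t = teval I w v' t" using Kn.prems by (intro teval_cong) auto
  moreover have "\<And>w'. sat R D I w' v \<phi> = sat R D I w' v' \<phi>" using Kn.prems by (intro Kn.IH) auto
  ultimately show ?case by (simp only: sat.simps)
qed

lemma teval_substt0: "teval I w v (substt \<sigma> t) = teval I w (\<lambda>u. teval I w v (\<sigma> u)) t"
proof (induction t)
  case (TF g ts)
  then have *: "map (teval I w v \<circ> substt \<sigma>) ts = map (teval I w (\<lambda>u. teval I w v (\<sigma> u))) ts" by auto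
  show ?case by (simp only: teval.simps substt.simps map_map *)
qed auto

lemma teval_substt: "(\<And>u. \<sigma> u = TV (f u)) \<Longrightarrow> teval I w v (substt \<sigma> t) = teval I w (v \<circ> f) t"
proof -
  assume a: "\<And>u. \<sigma> u = TV (f u)"
  have "(\<lambda>u. teval I w v (\<sigma> u)) = v \<circ> f" using a by auto
  then show ?thesis by (simp only: teval_substt0)
qed

lemma sat_subst: "(\<And>u. \<sigma> u = TV (f u)) \<Longrightarrow> sat R D I w v (subst \<sigma> \<phi>) = sat R D I w (v \<circ> f) \<phi>"
proof (induction \<phi> arbitrary: \<sigma> f v w)
  case (Eq t1 t2)
  then show ?case by (simp only: subst.simps sat.simps teval_substt)
next
  case (Rel P ts)
  then have *: "map (teval I w v \<circ> substt \<sigma>) ts = map (teval I w (v \<circ> f)) ts"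
    using teval_substt[of \<sigma> f I w v] by auto
  show ?case by (simp only: subst.simps sat.simps map_map *)
next
  case (Kn t \<phi>)
  then show ?case by (simp only: subst.simps sat.simps teval_substt)
next
  case (All z \<phi>)
  define X where "X = (\<Union>w \<in> fv (All z \<phi>). tvars (\<sigma> w))"
  define z' where "z' = (if z \<in> X then fresh (vsort z) X else z)"
  have finX: "finite X" unfolding X_def by (intro finite_UN_I finite_fv finite_tvars)
  have sz: "vsort z' = vsort z" by (simp add: z'_def fresh_sort)
  have z'X: "z' \<notin> X" using fresh_notin[OF finX] by (auto simp: z'_def)
  have X: "X = f ` (fv \<phi> - {z})" unfolding X_def using All.prems by auto
  have eq: "subst \<sigma> (All z \<phi>) = All z' (subst (\<sigma>(z := TV z')) \<phi>)"
    by (simp add: X_def z'_def Let_def)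
  have "sat R D I w (v(z' := d)) (subst (\<sigma>(z := TV z')) \<phi>) = sat R D I w ((v \<circ> f)(z := d)) \<phi>" for d
  proof -
    have "sat R D I w (v(z' := d)) (subst (\<sigma>(z := TV z')) \<phi>) = sat R D I w (v(z' := d) \<circ> f(z := z')) \<phi>"
      by (rule All.IH) (simp add: All.prems)
    also have "\<dots> = sat R D I w ((v \<circ> f)(z := d)) \<phi>"
    proof (rule sat_cong, intro ballI)
      fix u assume u: "u \<in> fv \<phi>"
      show "(v(z' := d) \<circ> f(z := z')) u = ((v \<circ> f)(z := d)) u"
      proof (cases "u = z")
        case False
        then have "f u \<in> X" using u X by auto
        then have "f u \<noteq> z'" using z'X by auto
        then show ?thesis using False by simp
      qed simp
    qed
    finally show ?thesis .
  qed
  then show ?case by (simp only: eq sat.simps sz)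
qed auto

lemma sat_substitute: "sat R D I w v (substitute \<phi> (TV y) x) = sat R D I w (v(x := v y)) \<phi>"
proof -
  have "sat R D I w v (substitute \<phi> (TV y) x) = sat R D I w (v \<circ> (id(x := y))) \<phi>"
    unfolding substitute_def by (rule sat_subst) simp
  moreover have "v \<circ> (id(x := y)) = v(x := v y)" by auto
  ultimately show ?thesis by simp
qed

lemma pinst_sat:
  "gsat (\<lambda>i. {(u, u'). (u, u') \<in> accR R (teval I u v (\<tau> i))}) (\<lambda>k. {u. sat R D I u v (\<rho> k)}) u \<psi>
   = sat R D I u v (pinst \<rho> \<tau> \<psi>)"
  by (induction \<psi> arbitrary: u) auto

lemma sat_conjs: "sat R D I w v (conjs \<phi>s \<psi>) = ((\<forall>\<phi>\<in>set \<phi>s. sat R D I w v \<phi>) \<and> sat R D I w v \<psi>)"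
  by (induction \<phi>s) (auto simp: conj_def)

lemma sat_disjs: "sat R D I w v (disjs \<phi> \<psi>s) = (sat R D I w v \<phi> \<or> (\<exists>\<psi>\<in>set \<psi>s. sat R D I w v \<psi>))"
  by (induction \<psi>s arbitrary: \<phi>) (auto simp: disj_def)

fun upd :: "(var \<Rightarrow> 'd) \<Rightarrow> var list \<Rightarrow> 'd list \<Rightarrow> var \<Rightarrow> 'd" where
  "upd v (x # xs) (d # ds) = upd (v(x := d)) xs ds"
| "upd v _ _ = v"

lemma upd_notin: "z \<notin> set xs \<Longrightarrow> upd v xs ds z = v z"
  by (induction v xs ds rule: upd.induct) auto

lemma upd_nth: "distinct xs \<Longrightarrow> length ds = length xs \<Longrightarrow> i < length xs \<Longrightarrow> upd v xs ds (xs ! i) = ds ! i"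
proof (induction v xs ds arbitrary: i rule: upd.induct)
  case (1 v x xs d ds)
  show ?case
  proof (cases i)
    case 0
    then show ?thesis using 1 by (simp add: upd_notin)
  next
    case (Suc j)
    then show ?thesis using 1 by (simp del: fun_upd_apply)
  qed
qed auto

lemma sat_exs: "list_all2 (\<lambda>x d. d \<in> domS D (vsort x)) xs ds \<Longrightarrow> sat R D I w (upd v xs ds) \<phi>
   \<Longrightarrow> sat R D I w v (exs xs \<phi>)"
proof (induction xs ds arbitrary: v rule: list_all2_induct)
  case Nil
  then show ?case by simp
next
  case (Cons x xs d ds)
  then have "sat R D I w (v(x := d)) (exs xs \<phi>)" by simp
  then show ?case using Cons.hyps(1) by (auto simp: Ex_def)
qed

lemma frame_succ: "is_frame W R D \<Longrightarrow> (w, w') \<in> accR R d \<Longrightarrow> w' \<in> W"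
  by (cases d) (auto simp: is_frame_def)

lemma sound_N:
  fixes R :: "'ag::finite \<Rightarrow> ('w \<times> 'w) set" and I :: "('c, 'f, 'p, 'w, 'ag, 'o) interp"
  assumes len: "length xs = card (UNIV :: 'ag set)" and dist: "distinct (y # xs)"
    and srt: "\<forall>z \<in> set (y # xs). vsort z = Agt"
  shows "sat R D I w v (ax_N xs y)"
proof -
  obtain as :: "'ag list" where das: "distinct as" and sas: "set as = UNIV"
    using finite_distinct_list[of "UNIV :: 'ag set"] by auto
  have las: "length as = length xs" using len distinct_card[OF das] sas by simp
  define ds :: "('ag, 'o) dval list" where "ds = map AgV as"
  have lds: "length ds = length xs" using las by (simp add: ds_def)
  define v' where "v' = upd v xs ds"
  have dxs: "distinct xs" using dist by simp
  have yxs: "y \<notin> set xs" using dist by simp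
  have v'nth: "v' (xs ! i) = AgV (as ! i)" if "i < length xs" for i
    using upd_nth[OF dxs lds that] that las by (simp add: v'_def ds_def)
  have ne: "xs \<noteq> []"
  proof
    assume "xs = []"
    then have "card (UNIV :: 'ag set) = 0" using len by simp
    then show False by simp
  qed
  have la2: "list_all2 (\<lambda>x d. d \<in> domS D (vsort x)) xs ds"
  proof (rule list_all2_all_nthI)
    show "length xs = length ds" using lds by simp
  next
    fix i assume "i < length xs"
    then have "vsort (xs ! i) = Agt" using srt by simp
    then show "ds ! i \<in> domS D (vsort (xs ! i))" using \<open>i < length xs\<close> las by (simp add: ds_def)
  qed
  have conjs_ok: "\<forall>\<phi>\<in>set [neq (TV (xs ! i)) (TV (xs ! j)). i \<leftarrow> [0..<length xs], j \<leftarrow> [Suc i..<length xs]].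
      sat R D I w v' \<phi>"
  proof
    fix \<phi> :: "('c, 'f, 'p) fm" assume "\<phi> \<in> set [neq (TV (xs ! i)) (TV (xs ! j)). i \<leftarrow> [0..<length xs], j \<leftarrow> [Suc i..<length xs]]"
    then obtain i j where ij: "i < j" "j < length xs" and \<phi>: "\<phi> = neq (TV (xs ! i)) (TV (xs ! j))"
      by (auto simp: Suc_le_eq)
    have "as ! i \<noteq> as ! j" using das ij las by (simp add: nth_eq_iff_index_eq)
    then show "sat R D I w v' \<phi>" using \<phi> v'nth ij by (simp add: neq_def)
  qed
  have all_ok: "sat R D I w v' (All y (disjs (Eq (TV y) (TV (hd xs))) [Eq (TV y) (TV x). x \<leftarrow> tl xs]))"
  proof -
    have "sat R D I w (v'(y := d)) (disjs (Eq (TV y) (TV (hd xs))) [Eq (TV y) (TV x). x \<leftarrow> tl xs])"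
      if "d \<in> domS D Agt" for d
    proof -
      have "d \<in> range AgV" using that by simp
      then obtain a where a: "d = AgV a" by blast
      obtain k where k: "k < length as" "as ! k = a" using sas by (metis UNIV_I in_set_conv_nth)
      have "v' (xs ! k) = d" using v'nth k las a by simp
      moreover have "xs ! k \<noteq> y" using yxs k las by auto
      moreover have "xs ! k \<in> set xs" using k las by simp
      ultimately have ex: "\<exists>x\<in>set xs. (v'(y := d)) x = d" by auto
      then obtain x where x: "x \<in> set xs" "(v'(y := d)) x = d" by blast
      have "xs = hd xs # tl xs" using ne by simp
      then have "x = hd xs \<or> x \<in> set (tl xs)" using x(1) by (metis set_ConsD)
      then show ?thesis using x by (auto simp: sat_disjs)
    qed
    then show ?thesis using srt by simp
  qed
  have "sat R D I w v' (conjs [neq (TV (xs ! i)) (TV (xs ! j)). i \<leftarrow> [0..<length xs], j \<leftarrow> [Suc i..<length xs]]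
        (All y (disjs (Eq (TV y) (TV (hd xs))) [Eq (TV y) (TV x). x \<leftarrow> tl xs])))"
    using conjs_ok all_ok by (simp only: sat_conjs)
  then show ?thesis unfolding ax_N_def v'_def by (rule sat_exs[OF la2])
qed

lemma sound_ax:
  fixes R :: "'ag::finite \<Rightarrow> ('w \<times> 'w) set" and I :: "('c, 'f, 'p, 'w, 'ag, 'o) interp"
  assumes ax: "ax_KTM S n \<phi>" and nn: "n = card (UNIV :: 'ag set)" and fr: "is_frame W R D"
    and ii: "is_interp S W D I" and ww: "w \<in> W" and vv: "\<forall>x. v x \<in> domS D (vsort x)"
  shows "sat R D I w v \<phi>"
  using ax
proof cases
  case (Taut \<psi> \<rho> \<tau>)
  have "gsat (\<lambda>i. {(u, u'). (u, u') \<in> accR R (teval I u v (\<tau> i))}) (\<lambda>k. {u. sat R D I u v (\<rho> k)}) w \<psi>"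
    by (rule pvalid_any[OF Taut(2)])
  then show ?thesis unfolding Taut(1) by (simp only: pinst_sat)
next
  case (AllE y x \<phi>)
  have vy: "v y \<in> domS D (vsort x)" using vv AllE(2) by metis
  show ?thesis unfolding AllE(1) sat.simps sat_substitute
  proof (intro impI)
    assume "\<forall>d\<in>domS D (vsort x). sat R D I w (v(x := d)) \<phi>"
    then show "sat R D I w (v(x := v y)) \<phi>" using vy by blast
  qed
next
  case (MSD x y)
  have "v x \<in> range AgV" using vv MSD by (metis domS.simps(1))
  moreover have "v y \<in> ObV ` D" using vv MSD by (metis domS.simps(2))
  ultimately show ?thesis unfolding MSD by (auto simp: neq_def)
next
  case (PS x y \<phi>)
  have "v x = v y \<Longrightarrow> v(x := v y) = v" by auto
  then show ?thesis unfolding PS by (auto simp only: sat_substitute sat.simps teval.simps)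
next
  case (ExId c x)
  have "Ic I c w \<in> domS D (vsort x)" using ii ww ExId(2) unfolding is_interp_def by blast
  then show ?thesis unfolding ExId by (auto simp: Ex_def)
next
  case (N xs y)
  show ?thesis unfolding N(1) by (rule sound_N[where R=R and I=I, OF _ N(3) N(4)]) (simp add: N(2) nn)
next
  case (BF x t \<phi>)
  have "teval I w (v(x := d)) t = teval I w v t" for d using BF(2) by (intro teval_cong) auto
  then show ?thesis unfolding BF by auto
next
  case (Id t)
  then show ?thesis by simp
next
  case (K t \<phi> \<psi>)
  then show ?thesis by simp
next
  case (KNI x y t)
  then show ?thesis by (simp add: neq_def)
qed

lemma sound_der:
  fixes R :: "'ag::finite \<Rightarrow> ('w \<times> 'w) set" and I :: "('c, 'f, 'p, 'w, 'ag, 'o) interp"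
  assumes der: "derivable S n \<phi>" and nn: "n = card (UNIV :: 'ag set)" and fr: "is_frame W R D"
    and ii: "is_interp S W D I"
  shows "w \<in> W \<Longrightarrow> \<forall>x. v x \<in> domS D (vsort x) \<Longrightarrow> sat R D I w v \<phi>"
  using der
proof (induction arbitrary: w v rule: derivable.induct)
  case (Ax \<phi>)
  show ?case by (rule sound_ax[OF Ax(1) nn fr ii Ax(3) Ax(4)])
next
  case (MP \<phi> \<psi>)
  have "sat R D I w v \<phi>" using MP.IH(1) MP.prems by blast
  moreover have "sat R D I w v (Imp \<phi> \<psi>)" using MP.IH(2) MP.prems by blast
  ultimately show ?case by simp
next
  case (KG \<phi> t)
  show ?case
  proof (simp only: sat.simps, intro allI impI)
    fix w' assume "(w, w') \<in> accR R (teval I w v t)"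
    then have "w' \<in> W" by (rule frame_succ[OF fr])
    then show "sat R D I w' v \<phi>" using KG.IH KG.prems(2) by blast
  qed
next
  case (Gen \<phi> \<psi> x)
  show ?case
  proof (simp only: sat.simps, intro impI ballI)
    fix d :: "('ag, 'o) dval" assume s: "sat R D I w v \<phi>" and d: "d \<in> domS D (vsort x)"
    have "\<forall>y\<in>fv \<phi>. (v(x := d)) y = v y" using Gen(2) by auto
    then have "sat R D I w (v(x := d)) \<phi> = sat R D I w v \<phi>" by (rule sat_cong)
    then have "sat R D I w (v(x := d)) \<phi>" using s by simp
    moreover have "\<forall>y. (v(x := d)) y \<in> domS D (vsort y)" using Gen.prems d by auto
    moreover have "sat R D I w (v(x := d)) (Imp \<phi> \<psi>)" using Gen.IH Gen.prems(1) \<open>\<forall>y. (v(x := d)) y \<in> domS D (vsort y)\<close> by blast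
    ultimately show "sat R D I w (v(x := d)) \<psi>" by simp
  qed
qed

theorem theorem6p2:
  fixes S :: "('c, 'f, 'p) sig" and \<phi> :: "('c, 'f, 'p) fm"
    and W :: "'w set" and R :: "'ag::finite \<Rightarrow> ('w \<times> 'w) set" and D :: "'o set"
  assumes "wf_sig S"
    and "wf_fm S \<phi>"
    and "derivable S (card (UNIV :: 'ag set)) \<phi>"
    and "is_frame W R D"
  shows "valid_in_frame S W R D \<phi>"
  unfolding valid_in_frame_def
proof (intro allI impI ballI)
  fix I :: "('c, 'f, 'p, 'w, 'ag, 'o) interp" and w and v :: "var \<Rightarrow> ('ag, 'o) dval"
  assume ii: "is_interp S W D I" and ww: "w \<in> W" and vv: "is_valuation D v"
  have "\<forall>x. v x \<in> domS D (vsort x)"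
  proof
    fix x
    have "v ` {y. vsort y = vsort x} = domS D (vsort x)" using vv unfolding is_valuation_def by blast
    then show "v x \<in> domS D (vsort x)" by blast
  qed
  then show "sat R D I w v \<phi>" using sound_der[OF assms(3) refl assms(4) ii ww] by blast
qed

end
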